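(* Let $H(\cdot)=H(\cdot;b_r)$ be as in the context, with $b=b_r\vee b^{**}$. Then: (I) $H'(x)>0$ for all $x\ge0$. (II) $H(0)\ge0$ if and only if $r_1e^{r_1b}-r_2e^{r_2b}\le\frac{r_1-r_2}{k}$; and $H(0)\le0$ if and only if $r_1e^{r_1b}-r_2e^{r_2b}\ge\frac{r_1-r_2}{k}$. (III) Condition (K) is equivalent to $b^{**}\le b^*$, which is equivalent to $r_1e^{r_1b^{**}}-r_2e^{r_2b^{**}}\le\frac{r_1-r_2}{k}$. Likewise, (K) with reversed inequality is equivalent to $b^{**}\ge b^*$, which is equivalent to $r_1e^{r_1b^{**}}-r_2e^{r_2b^{**}}\ge\frac{r_1-r_2}{k}$. (IV) If $b_r\le b^{**}$, then $H(0)\ge0$ is equivalent to (K), and $H(0)\le0$ is equivalent to (K) with reversed inequality. (V) If (K) holds with reversed inequality, then $H(0;b_r)\le0$ for every $b_r\ge0$. (VI) If (K) holds, then the equation $r_1e^{r_1\hat b}-r_2e^{r_2\hat b}=\frac{r_1-r_2}{k}$ has a unique solution $\hat b$ in $[b^{**},\infty)$, and $H(0;b_r)\ge0$ if and only if $b_r\le\hat b$.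
   Context: Fix parameters $\mu>0$, $\sigma>0$, $\alpha>0$ and $k>1$. Set $r_1:=-\frac{\mu}{\sigma^2}+\sqrt{\frac{\mu^2}{\sigma^4}+\frac{2\alpha}{\sigma^2}}$ and $r_2:=-\frac{\mu}{\sigma^2}-\sqrt{\frac{\mu^2}{\sigma^4}+\frac{2\alpha}{\sigma^2}}$ (so $r_2<0<r_1$ and $r_2^2>r_1^2$). Let $b^*:=\frac{\log(r_2^2/r_1^2)}{r_1-r_2}>0$ and let $b^{**}>0$ be the unique positive solution of $r_1e^{-r_2b}-r_2e^{-r_1b}=k(r_1-r_2)$. For a dividend payout barrier $b_r\ge0$ put $b=b_r\vee b^{**}$ and define $H(x;b_r):=\frac{1}{e^{r_1b}-e^{r_2b}}\Big(\frac{1-ke^{r_2b}}{r_1}e^{r_1x}-\frac{1-ke^{r_1b}}{r_2}e^{r_2x}\Big)$ for $0\le x\le b$ and $H(x;b_r):=x-b+\frac{1}{e^{r_1b}-e^{r_2b}}\Big(\frac{1-ke^{r_2b}}{r_1}e^{r_1b}-\frac{1-ke^{r_1b}}{r_2}e^{r_2b}\Big)$ for $x>b$. Condition (K) is the inequality $k\le\dfrac{r_1-r_2}{r_1\left(\frac{r_2^2}{r_1^2}\right)^{\frac{r_1}{r_1-r_2}}-r_2\left(\frac{r_2^2}{r_1^2}\right)^{\frac{r_2}{r_1-r_2}}}$. *)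

theory Defs
  imports "HOL-Analysis.Analysis"
begin

definition r1 :: "real \<Rightarrow> real \<Rightarrow> real \<Rightarrow> real" where
  "r1 \<mu> \<sigma> \<alpha> = - \<mu> / \<sigma>\<^sup>2 + sqrt (\<mu>\<^sup>2 / \<sigma>^4 + 2 * \<alpha> / \<sigma>\<^sup>2)"

definition r2 :: "real \<Rightarrow> real \<Rightarrow> real \<Rightarrow> real" where
  "r2 \<mu> \<sigma> \<alpha> = - \<mu> / \<sigma>\<^sup>2 - sqrt (\<mu>\<^sup>2 / \<sigma>^4 + 2 * \<alpha> / \<sigma>\<^sup>2)"

definition bstar :: "real \<Rightarrow> real \<Rightarrow> real \<Rightarrow> real" where
  "bstar \<mu> \<sigma> \<alpha> =
     ln ((r2 \<mu> \<sigma> \<alpha>)\<^sup>2 / (r1 \<mu> \<sigma> \<alpha>)\<^sup>2) / (r1 \<mu> \<sigma> \<alpha> - r2 \<mu> \<sigma> \<alpha>)"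

definition bss :: "real \<Rightarrow> real \<Rightarrow> real \<Rightarrow> real \<Rightarrow> real" where
  "bss \<mu> \<sigma> \<alpha> k = (THE b. b > 0 \<and>
     r1 \<mu> \<sigma> \<alpha> * exp (- r2 \<mu> \<sigma> \<alpha> * b) - r2 \<mu> \<sigma> \<alpha> * exp (- r1 \<mu> \<sigma> \<alpha> * b)
       = k * (r1 \<mu> \<sigma> \<alpha> - r2 \<mu> \<sigma> \<alpha>))"

definition bbar :: "real \<Rightarrow> real \<Rightarrow> real \<Rightarrow> real \<Rightarrow> real \<Rightarrow> real" where
  "bbar \<mu> \<sigma> \<alpha> k br = max br (bss \<mu> \<sigma> \<alpha> k)"

text \<open>The function H(x; b_r). The first branch is used for all x \<le> b (the paper only
  considers x \<ge> 0).\<close>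
definition H :: "real \<Rightarrow> real \<Rightarrow> real \<Rightarrow> real \<Rightarrow> real \<Rightarrow> real \<Rightarrow> real" where
  "H \<mu> \<sigma> \<alpha> k br x =
    (let p = r1 \<mu> \<sigma> \<alpha>; q = r2 \<mu> \<sigma> \<alpha>; b = bbar \<mu> \<sigma> \<alpha> k br;
         g = (\<lambda>y. ((1 - k * exp (q * b)) / p * exp (p * y) - (1 - k * exp (p * b)) / q * exp (q * y))
                   / (exp (p * b) - exp (q * b)))
     in if x \<le> b then g x else x - b + g b)"

definition Kbound :: "real \<Rightarrow> real \<Rightarrow> real \<Rightarrow> real" where
  "Kbound \<mu> \<sigma> \<alpha> =
    (let p = r1 \<mu> \<sigma> \<alpha>; q = r2 \<mu> \<sigma> \<alpha>
     in (p - q) / (p * (q\<^sup>2 / p\<^sup>2) powr (p / (p - q)) - q * (q\<^sup>2 / p\<^sup>2) powr (q / (p - q))))"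

definition condK :: "real \<Rightarrow> real \<Rightarrow> real \<Rightarrow> real \<Rightarrow> bool" where
  "condK \<mu> \<sigma> \<alpha> k \<longleftrightarrow> k \<le> Kbound \<mu> \<sigma> \<alpha>"

definition condK_rev :: "real \<Rightarrow> real \<Rightarrow> real \<Rightarrow> real \<Rightarrow> bool" where
  "condK_rev \<mu> \<sigma> \<alpha> k \<longleftrightarrow> k \<ge> Kbound \<mu> \<sigma> \<alpha>"

definition G :: "real \<Rightarrow> real \<Rightarrow> real \<Rightarrow> real \<Rightarrow> real" where
  "G \<mu> \<sigma> \<alpha> y = r1 \<mu> \<sigma> \<alpha> * exp (r1 \<mu> \<sigma> \<alpha> * y) - r2 \<mu> \<sigma> \<alpha> * exp (r2 \<mu> \<sigma> \<alpha> * y)"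

end

theory Submission imports Defs "HOL-Analysis.Analysis" begin

definition ff :: "real \<Rightarrow> real \<Rightarrow> real \<Rightarrow> real" where
  "ff p q y = p * exp (- q * y) - q * exp (- p * y)"
definition GG :: "real \<Rightarrow> real \<Rightarrow> real \<Rightarrow> real" where
  "GG p q y = p * exp (p * y) - q * exp (q * y)"
definition bsf :: "real \<Rightarrow> real \<Rightarrow> real" where
  "bsf p q = ln (q\<^sup>2 / p\<^sup>2) / (p - q)"

locale PQ =
  fixes p q :: real
  assumes p: "0 < p" and q: "q < 0" and pq: "p + q < 0"
begin

lemma pmq: "p - q > 0" using p q by linarith

lemma ratio_gt1: "q\<^sup>2 / p\<^sup>2 > 1"
proof -
  have "p < -q" using pq by linarith
  hence "p^2 < (-q)^2" using p by (intro power_strict_mono) auto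
  thus ?thesis using p by simp
qed

lemma bs_pos: "bsf p q > 0"
  unfolding bsf_def using ratio_gt1 pmq by (simp add: ln_gt_zero)

lemma exp_bs: "exp ((p - q) * bsf p q) = q\<^sup>2 / p\<^sup>2"
  unfolding bsf_def using pmq ratio_gt1 by simp

lemma ff_deriv: "(ff p q has_real_derivative (p*q*(exp (- p * t) - exp (- q * t)))) (at t)"
  unfolding ff_def
  by (rule derivative_eq_intros refl | simp)+ (simp add: algebra_simps)

lemma ff_cont: "continuous_on S (ff p q)"
  unfolding ff_def by (intro continuous_intros)

lemma ff_strict: assumes "0 \<le> x" "x < y" shows "ff p q x < ff p q y"
proof (rule DERIV_pos_imp_increasing_open[OF assms(2) _ ff_cont])
  fix t assume t: "x < t" "t < y"
  hence "t > 0" using assms by linarith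
  hence "exp (- p * t) < exp (- q * t)" using p q by (simp add: mult_strict_right_mono)
  hence "p*q*(exp (- p * t) - exp (- q * t)) > 0" using p q
    by (intro mult_neg_neg mult_pos_neg) auto
  thus "\<exists>y. DERIV (ff p q) t :> y \<and> y > 0" using ff_deriv by blast
qed

lemma ff0: "ff p q 0 = p - q" unfolding ff_def by simp

lemma ff_exists: assumes "K > p - q" shows "\<exists>b. b > 0 \<and> ff p q b = K"
proof -
  define Y where "Y = K / (p * (-q))"
  have "p * (-q) > 0" using mult_pos_neg[OF p q] by simp
  moreover have "K > 0" using assms pmq by linarith
  ultimately have Y: "Y > 0" unfolding Y_def by (rule divide_pos_pos[rotated])
  have "exp (- q * Y) \<ge> 1 + (- q * Y)" by (rule exp_ge_add_one_self)
  hence "p * exp (- q * Y) \<ge> p * (1 + (- q * Y))" using p by simp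
  moreover have "p * (1 + (- q * Y)) = p + K" unfolding Y_def using p q by (simp add: field_simps)
  moreover have "- q * exp (- p * Y) > 0" using q by (simp add: mult_neg_pos)
  ultimately have "ff p q Y \<ge> K" unfolding ff_def using p by linarith
  then obtain b where b: "0 \<le> b" "b \<le> Y" "ff p q b = K"
    using IVT[of "ff p q" 0 K Y] ff0 assms Y ff_cont continuous_on_eq_continuous_at
    by (smt (verit) UNIV_I open_UNIV)
  have "b \<noteq> 0" using b ff0 assms by auto
  hence "b > 0" using b by linarith
  thus ?thesis using b by blast
qed

lemma ff_unique: assumes "K > p - q" shows "\<exists>!b. b > 0 \<and> ff p q b = K"
proof -
  obtain b where "b > 0" "ff p q b = K" using ff_exists[OF assms] by blast
  moreover have "c = b" if "c > 0" "ff p q c = K" for c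
    using ff_strict[of c b] ff_strict[of b c] that \<open>b>0\<close> \<open>ff p q b = K\<close>
    by (cases c b rule: linorder_cases) auto
  ultimately show ?thesis by blast
qed

lemma GGff: "GG p q y * ff p q y - (p - q)\<^sup>2 =
   (exp ((p-q)*y) - 1) * (p\<^sup>2 * exp ((p-q)*y) - q\<^sup>2) / exp ((p-q)*y)"
proof -
  define a where "a = exp (p*y)"
  define c where "c = exp (q*y)"
  have a: "a > 0" "c > 0" unfolding a_def c_def by auto
  have e1: "exp (- q * y) = 1 / c" "exp (- p * y) = 1 / a" unfolding a_def c_def
    by (simp_all add: exp_minus field_simps)
  have e2: "exp ((p-q)*y) = a / c" unfolding a_def c_def by (simp add: left_diff_distrib exp_diff)
  show ?thesis unfolding GG_def ff_def e1 e2 a_def[symmetric] c_def[symmetric]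
    using a by (simp add: field_simps power2_eq_square)
qed

lemma sign_aux: "p\<^sup>2 * exp ((p-q)*y) - q\<^sup>2 \<le> 0 \<longleftrightarrow> y \<le> bsf p q"
  "p\<^sup>2 * exp ((p-q)*y) - q\<^sup>2 \<ge> 0 \<longleftrightarrow> y \<ge> bsf p q"
proof -
  have pp: "p\<^sup>2 > 0" using p by simp
  have "p\<^sup>2 * exp ((p-q)*y) - q\<^sup>2 = p\<^sup>2 * (exp ((p-q)*y) - exp ((p-q)*bsf p q))"
    using exp_bs pp by (simp add: field_simps)
  moreover have "exp ((p-q)*y) \<le> exp ((p-q)*bsf p q) \<longleftrightarrow> y \<le> bsf p q" using pmq by simp
  moreover have "exp ((p-q)*y) \<ge> exp ((p-q)*bsf p q) \<longleftrightarrow> y \<ge> bsf p q" using pmq by simp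
  ultimately show "p\<^sup>2 * exp ((p-q)*y) - q\<^sup>2 \<le> 0 \<longleftrightarrow> y \<le> bsf p q"
    "p\<^sup>2 * exp ((p-q)*y) - q\<^sup>2 \<ge> 0 \<longleftrightarrow> y \<ge> bsf p q" using pp
    by (auto simp: mult_le_0_iff zero_le_mult_iff)
qed

lemma GGff_le: assumes "y > 0" shows "GG p q y * ff p q y \<le> (p - q)\<^sup>2 \<longleftrightarrow> y \<le> bsf p q"
proof -
  have "exp ((p-q)*y) > 1" using assms pmq by simp
  hence "(exp ((p-q)*y) - 1) / exp ((p-q)*y) > 0" by (intro divide_pos_pos) auto
  then obtain c where c: "c > 0" "(exp ((p-q)*y) - 1) / exp ((p-q)*y) = c" by blast
  have "GG p q y * ff p q y - (p - q)\<^sup>2 = (p\<^sup>2 * exp ((p-q)*y) - q\<^sup>2) * c"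
    unfolding GGff c(2)[symmetric] by simp
  hence "GG p q y * ff p q y - (p - q)\<^sup>2 \<le> 0 \<longleftrightarrow> p\<^sup>2 * exp ((p-q)*y) - q\<^sup>2 \<le> 0"
    using c(1) by (simp add: mult_le_0_iff)
  thus ?thesis using sign_aux(1)[of y] by (smt (verit))
qed

lemma GGff_ge: assumes "y > 0" shows "GG p q y * ff p q y \<ge> (p - q)\<^sup>2 \<longleftrightarrow> y \<ge> bsf p q"
proof -
  have "exp ((p-q)*y) > 1" using assms pmq by simp
  hence "(exp ((p-q)*y) - 1) / exp ((p-q)*y) > 0" by (intro divide_pos_pos) auto
  then obtain c where c: "c > 0" "(exp ((p-q)*y) - 1) / exp ((p-q)*y) = c" by blast
  have "GG p q y * ff p q y - (p - q)\<^sup>2 = (p\<^sup>2 * exp ((p-q)*y) - q\<^sup>2) * c"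
    unfolding GGff c(2)[symmetric] by simp
  hence "GG p q y * ff p q y - (p - q)\<^sup>2 \<ge> 0 \<longleftrightarrow> p\<^sup>2 * exp ((p-q)*y) - q\<^sup>2 \<ge> 0"
    using c(1) by (simp add: zero_le_mult_iff)
  thus ?thesis using sign_aux(2)[of y] by (smt (verit))
qed

lemma GG_pos: "GG p q y > 0" unfolding GG_def using p q
  by (smt (verit) exp_gt_zero mult_neg_pos mult_pos_pos)

lemma ff_pos: "ff p q y > 0" unfolding ff_def using p q
  by (smt (verit) exp_gt_zero mult_neg_pos mult_pos_pos)

lemma GG_bs: "GG p q (bsf p q) * ff p q (bsf p q) = (p - q)\<^sup>2"
  using GGff_le[OF bs_pos] GGff_ge[OF bs_pos] by simp

lemma GG_deriv: "(GG p q has_real_derivative (p\<^sup>2 * exp (p*t) - q\<^sup>2 * exp (q*t))) (at t)"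
  unfolding GG_def
  by (rule derivative_eq_intros refl | simp)+ (simp add: algebra_simps power2_eq_square)

lemma GG_cont: "continuous_on S (GG p q)"
  unfolding GG_def by (intro continuous_intros)

lemma GGd_sign: "p\<^sup>2 * exp (p*t) - q\<^sup>2 * exp (q*t) = exp (q*t) * (p\<^sup>2 * exp ((p-q)*t) - q\<^sup>2)"
  by (simp add: algebra_simps exp_diff[symmetric] exp_add[symmetric] left_diff_distrib)

lemma GGd_neg: "t < bsf p q \<Longrightarrow> p\<^sup>2 * exp (p*t) - q\<^sup>2 * exp (q*t) < 0"
  unfolding GGd_sign using sign_aux(2)[of t] by (simp add: mult_pos_neg)

lemma GGd_pos: "t > bsf p q \<Longrightarrow> p\<^sup>2 * exp (p*t) - q\<^sup>2 * exp (q*t) > 0"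
  unfolding GGd_sign using sign_aux(1)[of t] by simp

lemma GG_dec: assumes "x < y" "y \<le> bsf p q" shows "GG p q y < GG p q x"
proof (rule DERIV_neg_imp_decreasing_open[OF assms(1) _ GG_cont])
  fix t assume "x < t" "t < y"
  hence "t < bsf p q" using assms by linarith
  thus "\<exists>d. DERIV (GG p q) t :> d \<and> d < 0" using GG_deriv[of t] GGd_neg[of t] by blast
qed

lemma GG_inc: assumes "bsf p q \<le> x" "x < y" shows "GG p q x < GG p q y"
proof (rule DERIV_pos_imp_increasing_open[OF assms(2) _ GG_cont])
  fix t assume "x < t" "t < y"
  hence "t > bsf p q" using assms by linarith
  thus "\<exists>d. DERIV (GG p q) t :> d \<and> d > 0" using GG_deriv[of t] GGd_pos[of t] by blast
qed

lemma GG_big: assumes "a \<ge> 0" shows "\<exists>Y\<ge>a. GG p q Y \<ge> c"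
proof -
  define Y where "Y = max a (\<bar>c\<bar> / p\<^sup>2)"
  have Y: "Y \<ge> a" "Y \<ge> \<bar>c\<bar> / p\<^sup>2" unfolding Y_def by auto
  have "p\<^sup>2 * Y \<ge> \<bar>c\<bar>" using Y(2) p by (simp add: field_simps)
  have "exp (p * Y) \<ge> 1 + p * Y" by (rule exp_ge_add_one_self)
  hence "p * exp (p * Y) \<ge> p * (1 + p * Y)" using p by simp
  moreover have "- q * exp (q * Y) > 0" using q by (simp add: mult_neg_pos)
  moreover have "p * (1 + p * Y) = p + p\<^sup>2 * Y" by (simp add: algebra_simps power2_eq_square)
  ultimately have "GG p q Y \<ge> c" unfolding GG_def using \<open>p\<^sup>2 * Y \<ge> \<bar>c\<bar>\<close> p by linarith
  thus ?thesis using Y by blast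
qed

end

definition gf :: "real \<Rightarrow> real \<Rightarrow> real \<Rightarrow> real \<Rightarrow> real \<Rightarrow> real" where
  "gf p q k b y = ((1 - k * exp (q * b)) / p * exp (p * y) - (1 - k * exp (p * b)) / q * exp (q * y))
                   / (exp (p * b) - exp (q * b))"
definition Hf :: "real \<Rightarrow> real \<Rightarrow> real \<Rightarrow> real \<Rightarrow> real \<Rightarrow> real" where
  "Hf p q k b x = (if x \<le> b then gf p q k b x else x - b + gf p q k b b)"

lemma gderiv_gen: "p \<noteq> 0 \<Longrightarrow> q \<noteq> 0 \<Longrightarrow> D \<noteq> 0 \<Longrightarrow>
  ((\<lambda>y. (A / p * exp (p * y) - B / q * exp (q * y)) / D) has_real_derivative
   (A * exp (p * y) - B * exp (q * y)) / D) (at y)" for A B D p q y :: real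
  apply (rule derivative_eq_intros refl)+
   apply (simp_all add: field_simps)
  done

locale PQK = PQ +
  fixes k b :: real
  assumes k: "k > 1" and b: "b > 0"
begin

lemma Dpos: "exp (p * b) - exp (q * b) > 0"
  using p q b by (simp add: mult_strict_right_mono)

lemma H0: "(gf p q k b 0 \<ge> 0 \<longleftrightarrow> GG p q b \<le> (p - q) / k)
         \<and> (gf p q k b 0 \<le> 0 \<longleftrightarrow> GG p q b \<ge> (p - q) / k)"
proof -
  define D where "D = exp (p * b) - exp (q * b)"
  have D: "D > 0" unfolding D_def by (rule Dpos)
  have pq0: "- (p * q) > 0" using mult_pos_neg[OF p q] by simp
  have "gf p q k b 0 = ((p - q) - k * GG p q b) / (- (p * q) * D)"
    unfolding gf_def GG_def D_def[symmetric] using p q D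
    by (simp add: field_simps)
  moreover have "- (p * q) * D > 0" by (rule mult_pos_pos[OF pq0 D])
  ultimately obtain d where d: "d > 0" "gf p q k b 0 = ((p - q) - k * GG p q b) / d" by blast
  have n1: "(p - q) - k * GG p q b \<ge> 0 \<longleftrightarrow> GG p q b \<le> (p - q) / k"
    using k by (simp add: le_divide_eq algebra_simps)
  have n2: "(p - q) - k * GG p q b \<le> 0 \<longleftrightarrow> GG p q b \<ge> (p - q) / k"
    using k by (simp add: divide_le_eq algebra_simps)
  have s1: "gf p q k b 0 \<ge> 0 \<longleftrightarrow> (p - q) - k * GG p q b \<ge> 0"
    unfolding d(2) using d(1) by (simp add: zero_le_divide_iff)
  have s2: "gf p q k b 0 \<le> 0 \<longleftrightarrow> (p - q) - k * GG p q b \<le> 0"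
    unfolding d(2) using d(1) by (simp add: divide_le_0_iff)
  show ?thesis using s1 s2 n1 n2 by blast
qed

definition gd where "gd y = ((1 - k * exp (q * b)) * exp (p * y) - (1 - k * exp (p * b)) * exp (q * y))
                   / (exp (p * b) - exp (q * b))"

lemma gf_deriv: "(gf p q k b has_real_derivative gd y) (at y)"
  unfolding gf_def gd_def using p q Dpos by (intro gderiv_gen) auto

lemma gd_b: "gd b = 1"
proof -
  have "p \<noteq> q" using pmq by simp
  have "(1 - k * exp (q * b)) * exp (p * b) - (1 - k * exp (p * b)) * exp (q * b) = exp (p * b) - exp (q * b)"
    by (simp add: algebra_simps)
  moreover have "exp (p * b) - exp (q * b) \<noteq> 0" using Dpos by linarith
  ultimately show ?thesis unfolding gd_def by simp
qed

lemma gd_pos: assumes "y \<le> b" shows "gd y > 0"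
proof -
  define A where "A = 1 - k * exp (q * b)"
  define B where "B = 1 - k * exp (p * b)"
  have B: "B < 0" unfolding B_def using k p b
    by (smt (verit) exp_ge_add_one_self mult_le_cancel_left1 mult_pos_pos)
  have e1: "exp (p * y) \<le> exp (p * b)" using assms p by (simp add: mult_left_mono)
  have e2: "exp (q * b) \<le> exp (q * y)" using assms q by (simp add: mult_left_mono_neg)
  have "A * exp (p * y) - B * exp (q * y) > 0"
  proof (cases "A \<ge> 0")
    case True
    have "- B * exp (q * y) > 0" using B by (simp add: mult_neg_pos)
    moreover have "A * exp (p * y) \<ge> 0" using True by simp
    ultimately show ?thesis by linarith
  next
    case False
    have "A * exp (p * y) \<ge> A * exp (p * b)" using False e1 by (simp add: mult_left_mono_neg)
    moreover have "- B * exp (q * y) \<ge> - B * exp (q * b)" using B e2 by (simp add: mult_left_mono)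
    moreover have "A * exp (p * b) - B * exp (q * b) = exp (p * b) - exp (q * b)"
      unfolding A_def B_def by (simp add: algebra_simps)
    ultimately show ?thesis using Dpos by linarith
  qed
  thus ?thesis unfolding gd_def A_def[symmetric] B_def[symmetric] using Dpos by simp
qed

lemma Hf_deriv: "\<exists>D. (Hf p q k b has_real_derivative D) (at x) \<and> D > 0"
proof -
  have D: "((\<lambda>x. if x \<in> {..b} then gf p q k b x else x - b + gf p q k b b) has_derivative
      (if x \<in> {..b} then (\<lambda>h. gd x * h) else (\<lambda>h. 1 * h))) (at x within ({..b} \<union> {b<..}))"
  proof (rule has_derivative_If_within_closures)
    show "(gf p q k b has_derivative (\<lambda>h. gd x * h)) (at x within {..b} \<union> (closure {..b} \<inter> closure {b<..}))"
      using gf_deriv[of x] unfolding has_field_derivative_def by (rule has_derivative_at_withinI)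
    show "((\<lambda>x. x - b + gf p q k b b) has_derivative (\<lambda>h. 1 * h)) (at x within {b<..} \<union> (closure {..b} \<inter> closure {b<..}))"
      by (rule derivative_eq_intros refl | simp)+
    show "x \<in> closure {..b} \<Longrightarrow> x \<in> closure {b<..} \<Longrightarrow> gf p q k b x = x - b + gf p q k b b" by simp
    show "x \<in> closure {..b} \<Longrightarrow> x \<in> closure {b<..} \<Longrightarrow> (\<lambda>h. gd x * h) = (\<lambda>h. 1 * h)"
      using gd_b by simp
    show "x \<in> {..b} \<union> {b<..}" by auto
  qed
  moreover have "{..b} \<union> {b<..} = (UNIV :: real set)" by auto
  moreover have "(\<lambda>x. if x \<in> {..b} then gf p q k b x else x - b + gf p q k b b) = Hf p q k b"
    unfolding Hf_def by auto
  moreover have "(if x \<in> {..b} then (\<lambda>h. gd x * h) else (\<lambda>h. 1 * h)) = (\<lambda>h. (if x \<le> b then gd x else 1) * h)"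
    by auto
  ultimately have "(Hf p q k b has_derivative (\<lambda>h. (if x \<le> b then gd x else 1) * h)) (at x)"
    by (simp only:)
  hence "(Hf p q k b has_real_derivative (if x \<le> b then gd x else 1)) (at x)"
    unfolding has_field_derivative_def .
  moreover have "(if x \<le> b then gd x else 1) > 0" using gd_pos by auto
  ultimately show ?thesis by blast
qed

end
context PQ
begin

lemma ff_le_iff: "0 \<le> x \<Longrightarrow> 0 \<le> y \<Longrightarrow> ff p q x \<le> ff p q y \<longleftrightarrow> x \<le> y"
  using ff_strict[of x y] ff_strict[of y x] by (cases x y rule: linorder_cases) auto

lemma GG_ge_dec: "b0 \<le> m \<Longrightarrow> m \<le> bsf p q \<Longrightarrow> GG p q m \<le> GG p q b0"
  using GG_dec[of b0 m] by (cases "b0 = m") auto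

lemma GG_ge_inc: "bsf p q \<le> b0 \<Longrightarrow> b0 \<le> m \<Longrightarrow> GG p q b0 \<le> GG p q m"
  using GG_inc[of b0 m] by (cases "b0 = m") auto

context
  fixes k b0 :: real
  assumes k: "k > 1" and b0: "b0 > 0" and fb0: "ff p q b0 = k * (p - q)"
begin

lemma kpq: "k * (p - q) > 0" using k pmq by simp

lemma III_b: "b0 \<le> bsf p q \<longleftrightarrow> GG p q b0 \<le> (p - q) / k"
proof -
  have "GG p q b0 \<le> (p - q) / k \<longleftrightarrow> GG p q b0 * (k * (p - q)) \<le> (p - q) / k * (k * (p - q))"
    by (rule mult_le_cancel_right_pos[OF kpq, symmetric])
  also have "(p - q) / k * (k * (p - q)) = (p - q)\<^sup>2" using k by (simp add: power2_eq_square)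
  finally show ?thesis using GGff_le[OF b0] fb0 by simp
qed

lemma III_d: "b0 \<ge> bsf p q \<longleftrightarrow> GG p q b0 \<ge> (p - q) / k"
proof -
  have "GG p q b0 \<ge> (p - q) / k \<longleftrightarrow> GG p q b0 * (k * (p - q)) \<ge> (p - q) / k * (k * (p - q))"
    by (rule mult_le_cancel_right_pos[OF kpq, symmetric])
  also have "(p - q) / k * (k * (p - q)) = (p - q)\<^sup>2" using k by (simp add: power2_eq_square)
  finally show ?thesis using GGff_ge[OF b0] fb0 by simp
qed

lemma Kb_eq: "(p - q) / GG p q (bsf p q) = ff p q (bsf p q) / (p - q)"
  using GG_bs GG_pos[of "bsf p q"] pmq by (simp add: field_simps power2_eq_square)

lemma III_a: "k \<le> (p - q) / GG p q (bsf p q) \<longleftrightarrow> b0 \<le> bsf p q"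
proof -
  have "k \<le> ff p q (bsf p q) / (p - q) \<longleftrightarrow> ff p q b0 \<le> ff p q (bsf p q)"
    using pmq fb0 by (simp add: le_divide_eq)
  thus ?thesis using Kb_eq ff_le_iff[of b0 "bsf p q"] b0 bs_pos by simp
qed

lemma III_c: "k \<ge> (p - q) / GG p q (bsf p q) \<longleftrightarrow> b0 \<ge> bsf p q"
proof -
  have "k \<ge> ff p q (bsf p q) / (p - q) \<longleftrightarrow> ff p q b0 \<ge> ff p q (bsf p q)"
    using pmq fb0 by (simp add: divide_le_eq)
  thus ?thesis using Kb_eq ff_le_iff[of "bsf p q" b0] b0 bs_pos by simp
qed

lemma V_abs: "b0 \<ge> bsf p q \<Longrightarrow> m \<ge> b0 \<Longrightarrow> GG p q m \<ge> (p - q) / k"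
  using GG_ge_inc[of b0 m] III_d[THEN iffD1] by linarith

lemma VI_ge_bs: assumes "b0 \<le> bsf p q" "bh \<ge> b0" "GG p q bh = (p - q) / k"
  shows "bh \<ge> bsf p q"
proof (rule ccontr)
  assume "\<not> bh \<ge> bsf p q"
  hence lt: "bh < bsf p q" by simp
  show False
  proof (cases "b0 = bh")
    case True
    hence "GG p q b0 \<ge> (p - q) / k" using assms(3) by simp
    hence "b0 \<ge> bsf p q" using III_d by blast
    thus False using True lt by simp
  next
    case False
    hence "GG p q bh < GG p q b0" using GG_dec[of b0 bh] assms lt by simp
    thus False using assms III_b[THEN iffD1, OF assms(1)] by linarith
  qed
qed

lemma VI_ex: assumes "b0 \<le> bsf p q"
  shows "\<exists>!bh. bh \<ge> b0 \<and> GG p q bh = (p - q) / k"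
proof -
  have g1: "GG p q (bsf p q) \<le> (p - q) / k"
    using GG_ge_dec[of b0 "bsf p q"] assms III_b[THEN iffD1, OF assms(1)] by linarith
  obtain Y where Y: "Y \<ge> bsf p q" "GG p q Y \<ge> (p - q) / k"
    using GG_big[of "bsf p q" "(p - q) / k"] bs_pos by auto
  have ic: "\<forall>x. bsf p q \<le> x \<and> x \<le> Y \<longrightarrow> isCont (GG p q) x"
    unfolding GG_def by (auto intro!: continuous_intros)
  obtain bh where bh: "bh \<ge> bsf p q" "bh \<le> Y" "GG p q bh = (p - q) / k"
    using IVT[of "GG p q" "bsf p q" "(p - q) / k" Y, OF g1 Y(2) Y(1) ic] by blast
  have bhb0: "bh \<ge> b0" using bh assms by linarith
  have uniq: "x = bh" if "x \<ge> b0" "GG p q x = (p - q) / k" for x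
  proof -
    have "x \<ge> bsf p q" using VI_ge_bs[OF assms that] .
    show ?thesis
    proof (rule ccontr)
      assume "x \<noteq> bh"
      then consider "x < bh" | "bh < x" by linarith
      thus False
      proof cases
        case 1 thus False using GG_inc[OF \<open>x \<ge> bsf p q\<close> 1] bh(3) that(2) by simp
      next
        case 2 thus False using GG_inc[OF bh(1) 2] bh(3) that(2) by simp
      qed
    qed
  qed
  show ?thesis
  proof (rule ex1I[where a=bh])
    show "bh \<ge> b0 \<and> GG p q bh = (p - q) / k" using bhb0 bh(3) by simp
  next
    fix x assume "x \<ge> b0 \<and> GG p q x = (p - q) / k"
    thus "x = bh" using uniq by blast
  qed
qed

lemma VI_iff: assumes "b0 \<le> bsf p q" "bh \<ge> b0" "GG p q bh = (p - q) / k" "m \<ge> b0"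
  shows "GG p q m \<le> (p - q) / k \<longleftrightarrow> m \<le> bh"
proof -
  have bhs: "bh \<ge> bsf p q" using VI_ge_bs[OF assms(1-3)] .
  show ?thesis
  proof
    assume "GG p q m \<le> (p - q) / k"
    show "m \<le> bh"
    proof (rule ccontr)
      assume "\<not> m \<le> bh"
      hence "GG p q bh < GG p q m" using GG_inc[OF bhs] by simp
      thus False using assms \<open>GG p q m \<le> (p - q) / k\<close> by linarith
    qed
  next
    assume mb: "m \<le> bh"
    show "GG p q m \<le> (p - q) / k"
    proof (cases "m \<le> bsf p q")
      case True
      thus ?thesis using GG_ge_dec[of b0 m] assms III_b[THEN iffD1, OF assms(1)] by linarith
    next
      case False
      thus ?thesis using GG_ge_inc[of m bh] assms mb by linarith
    qed
  qed
qed

end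
end


lemma PQ_inst:
  fixes \<mu> \<sigma> \<alpha> :: real
  assumes "\<mu> > 0" and "\<sigma> > 0" and "\<alpha> > 0"
  shows "PQ (r1 \<mu> \<sigma> \<alpha>) (r2 \<mu> \<sigma> \<alpha>)"
proof -
  define m where "m = \<mu> / \<sigma>\<^sup>2"
  define S where "S = sqrt (\<mu>\<^sup>2 / \<sigma>^4 + 2 * \<alpha> / \<sigma>\<^sup>2)"
  have m: "m > 0" unfolding m_def using assms by simp
  have e: "\<mu>\<^sup>2 / \<sigma>^4 = m\<^sup>2" unfolding m_def by (simp add: power_divide flip: power_mult)
  have "2 * \<alpha> / \<sigma>\<^sup>2 > 0" using assms by simp
  hence "m\<^sup>2 < \<mu>\<^sup>2 / \<sigma>^4 + 2 * \<alpha> / \<sigma>\<^sup>2" using e by simp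
  hence S: "m < S" unfolding S_def by (rule real_less_rsqrt)
  have r1: "r1 \<mu> \<sigma> \<alpha> = - m + S" unfolding r1_def m_def S_def by simp
  have r2: "r2 \<mu> \<sigma> \<alpha> = - m - S" unfolding r2_def m_def S_def by simp
  show ?thesis unfolding r1 r2 using m S by unfold_locales linarith+
qed

theorem mainTheorem4:
  fixes \<mu> \<sigma> \<alpha> k :: real
  assumes "\<mu> > 0" and "\<sigma> > 0" and "\<alpha> > 0" and "k > 1"
  shows
   "(\<forall>br\<ge>0. \<forall>x\<ge>0. \<exists>D. (H \<mu> \<sigma> \<alpha> k br has_real_derivative D) (at x within {0..}) \<and> D > 0)
  \<and> (\<forall>br\<ge>0.
       (H \<mu> \<sigma> \<alpha> k br 0 \<ge> 0 \<longleftrightarrow>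
          G \<mu> \<sigma> \<alpha> (bbar \<mu> \<sigma> \<alpha> k br) \<le> (r1 \<mu> \<sigma> \<alpha> - r2 \<mu> \<sigma> \<alpha>) / k)
     \<and> (H \<mu> \<sigma> \<alpha> k br 0 \<le> 0 \<longleftrightarrow>
          G \<mu> \<sigma> \<alpha> (bbar \<mu> \<sigma> \<alpha> k br) \<ge> (r1 \<mu> \<sigma> \<alpha> - r2 \<mu> \<sigma> \<alpha>) / k))
  \<and> ((condK \<mu> \<sigma> \<alpha> k \<longleftrightarrow> bss \<mu> \<sigma> \<alpha> k \<le> bstar \<mu> \<sigma> \<alpha>)
     \<and> (bss \<mu> \<sigma> \<alpha> k \<le> bstar \<mu> \<sigma> \<alpha> \<longleftrightarrow>
          G \<mu> \<sigma> \<alpha> (bss \<mu> \<sigma> \<alpha> k) \<le> (r1 \<mu> \<sigma> \<alpha> - r2 \<mu> \<sigma> \<alpha>) / k)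
     \<and> (condK_rev \<mu> \<sigma> \<alpha> k \<longleftrightarrow> bss \<mu> \<sigma> \<alpha> k \<ge> bstar \<mu> \<sigma> \<alpha>)
     \<and> (bss \<mu> \<sigma> \<alpha> k \<ge> bstar \<mu> \<sigma> \<alpha> \<longleftrightarrow>
          G \<mu> \<sigma> \<alpha> (bss \<mu> \<sigma> \<alpha> k) \<ge> (r1 \<mu> \<sigma> \<alpha> - r2 \<mu> \<sigma> \<alpha>) / k))
  \<and> (\<forall>br. 0 \<le> br \<and> br \<le> bss \<mu> \<sigma> \<alpha> k \<longrightarrow>
       (H \<mu> \<sigma> \<alpha> k br 0 \<ge> 0 \<longleftrightarrow> condK \<mu> \<sigma> \<alpha> k)
     \<and> (H \<mu> \<sigma> \<alpha> k br 0 \<le> 0 \<longleftrightarrow> condK_rev \<mu> \<sigma> \<alpha> k))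
  \<and> (condK_rev \<mu> \<sigma> \<alpha> k \<longrightarrow> (\<forall>br\<ge>0. H \<mu> \<sigma> \<alpha> k br 0 \<le> 0))
  \<and> (condK \<mu> \<sigma> \<alpha> k \<longrightarrow>
       (\<exists>!bh. bh \<ge> bss \<mu> \<sigma> \<alpha> k \<and> G \<mu> \<sigma> \<alpha> bh = (r1 \<mu> \<sigma> \<alpha> - r2 \<mu> \<sigma> \<alpha>) / k)
     \<and> (\<forall>bh. bh \<ge> bss \<mu> \<sigma> \<alpha> k \<and> G \<mu> \<sigma> \<alpha> bh = (r1 \<mu> \<sigma> \<alpha> - r2 \<mu> \<sigma> \<alpha>) / k \<longrightarrow>
          (\<forall>br\<ge>0. H \<mu> \<sigma> \<alpha> k br 0 \<ge> 0 \<longleftrightarrow> br \<le> bh)))"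
proof -
  define p where "p = r1 \<mu> \<sigma> \<alpha>"
  define q where "q = r2 \<mu> \<sigma> \<alpha>"
  interpret PQ p q unfolding p_def q_def by (rule PQ_inst[OF assms(1-3)])
  have k: "k > 1" by (rule assms(4))
  define b0 where "b0 = bss \<mu> \<sigma> \<alpha> k"
  have kK: "k * (p - q) > p - q" using k pmq by simp
  have bss_eq: "b0 = (THE b. b > 0 \<and> ff p q b = k * (p - q))"
    unfolding b0_def bss_def ff_def p_def q_def by simp
  have "b0 > 0 \<and> ff p q b0 = k * (p - q)"
    unfolding bss_eq by (rule theI'[OF ff_unique[OF kK]])
  hence b0: "b0 > 0" and fb0: "ff p q b0 = k * (p - q)" by auto
  have Geq: "G \<mu> \<sigma> \<alpha> y = GG p q y" for y unfolding G_def GG_def p_def q_def by simp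
  have bstar_eq: "bstar \<mu> \<sigma> \<alpha> = bsf p q" unfolding bstar_def bsf_def p_def q_def by simp
  have rne: "q\<^sup>2 / p\<^sup>2 \<noteq> 0" using p q by simp
  have pw1: "(q\<^sup>2 / p\<^sup>2) powr (p / (p - q)) = exp (p * bsf p q)"
    unfolding powr_def bsf_def using rne by simp
  have pw2: "(q\<^sup>2 / p\<^sup>2) powr (q / (p - q)) = exp (q * bsf p q)"
    unfolding powr_def bsf_def using rne by simp
  have Kb_eq: "Kbound \<mu> \<sigma> \<alpha> = (p - q) / GG p q (bsf p q)"
    unfolding Kbound_def Let_def p_def[symmetric] q_def[symmetric] pw1 pw2 GG_def ..
  have cK: "condK \<mu> \<sigma> \<alpha> k \<longleftrightarrow> k \<le> (p - q) / GG p q (bsf p q)"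
    unfolding condK_def Kb_eq ..
  have cKr: "condK_rev \<mu> \<sigma> \<alpha> k \<longleftrightarrow> k \<ge> (p - q) / GG p q (bsf p q)"
    unfolding condK_rev_def Kb_eq ..
  have bb: "bbar \<mu> \<sigma> \<alpha> k br = max br b0" for br unfolding bbar_def b0_def ..
  have bbpos: "max br b0 > 0" for br using b0 by linarith
  have Heq: "H \<mu> \<sigma> \<alpha> k br = Hf p q k (max br b0)" for br
    by (rule ext) (simp add: H_def Hf_def gf_def Let_def p_def q_def bb)
  have H0eq: "H \<mu> \<sigma> \<alpha> k br 0 = gf p q k (max br b0) 0" for br
    unfolding Heq Hf_def using bbpos[of br] by simp
  have HH0: "(H \<mu> \<sigma> \<alpha> k br 0 \<ge> 0 \<longleftrightarrow> GG p q (max br b0) \<le> (p - q) / k)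
         \<and> (H \<mu> \<sigma> \<alpha> k br 0 \<le> 0 \<longleftrightarrow> GG p q (max br b0) \<ge> (p - q) / k)" for br
  proof -
    interpret PQK p q k "max br b0" by unfold_locales (use k bbpos in auto)
    show ?thesis unfolding H0eq by (rule H0)
  qed
  have rq: "r1 \<mu> \<sigma> \<alpha> - r2 \<mu> \<sigma> \<alpha> = p - q" unfolding p_def q_def ..
  note IIIa = III_a[OF k b0 fb0] and IIIb = III_b[OF k b0 fb0]
    and IIIc = III_c[OF k b0 fb0] and IIId = III_d[OF k b0 fb0]
  have P1: "\<forall>br\<ge>0. \<forall>x\<ge>0. \<exists>D. (H \<mu> \<sigma> \<alpha> k br has_real_derivative D) (at x within {0..}) \<and> D > 0"
  proof (intro allI impI)
    fix br x :: real
    interpret PQK p q k "max br b0" by unfold_locales (use k bbpos in auto)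
    obtain D where "(Hf p q k (max br b0) has_real_derivative D) (at x)" "D > 0"
      using Hf_deriv by blast
    thus "\<exists>D. (H \<mu> \<sigma> \<alpha> k br has_real_derivative D) (at x within {0..}) \<and> D > 0"
      unfolding Heq using has_field_derivative_at_within by blast
  qed
  have P2: "\<forall>br\<ge>0.
       (H \<mu> \<sigma> \<alpha> k br 0 \<ge> 0 \<longleftrightarrow>
          G \<mu> \<sigma> \<alpha> (bbar \<mu> \<sigma> \<alpha> k br) \<le> (r1 \<mu> \<sigma> \<alpha> - r2 \<mu> \<sigma> \<alpha>) / k)
     \<and> (H \<mu> \<sigma> \<alpha> k br 0 \<le> 0 \<longleftrightarrow>
          G \<mu> \<sigma> \<alpha> (bbar \<mu> \<sigma> \<alpha> k br) \<ge> (r1 \<mu> \<sigma> \<alpha> - r2 \<mu> \<sigma> \<alpha>) / k)"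
    unfolding Geq bb rq using HH0 by blast
  have P3: "(condK \<mu> \<sigma> \<alpha> k \<longleftrightarrow> bss \<mu> \<sigma> \<alpha> k \<le> bstar \<mu> \<sigma> \<alpha>)
     \<and> (bss \<mu> \<sigma> \<alpha> k \<le> bstar \<mu> \<sigma> \<alpha> \<longleftrightarrow>
          G \<mu> \<sigma> \<alpha> (bss \<mu> \<sigma> \<alpha> k) \<le> (r1 \<mu> \<sigma> \<alpha> - r2 \<mu> \<sigma> \<alpha>) / k)
     \<and> (condK_rev \<mu> \<sigma> \<alpha> k \<longleftrightarrow> bss \<mu> \<sigma> \<alpha> k \<ge> bstar \<mu> \<sigma> \<alpha>)
     \<and> (bss \<mu> \<sigma> \<alpha> k \<ge> bstar \<mu> \<sigma> \<alpha> \<longleftrightarrow>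
          G \<mu> \<sigma> \<alpha> (bss \<mu> \<sigma> \<alpha> k) \<ge> (r1 \<mu> \<sigma> \<alpha> - r2 \<mu> \<sigma> \<alpha>) / k)"
    unfolding Geq rq bstar_eq b0_def[symmetric] cK cKr using IIIa IIIb IIIc IIId by blast
  have P4: "\<forall>br. 0 \<le> br \<and> br \<le> bss \<mu> \<sigma> \<alpha> k \<longrightarrow>
       (H \<mu> \<sigma> \<alpha> k br 0 \<ge> 0 \<longleftrightarrow> condK \<mu> \<sigma> \<alpha> k)
     \<and> (H \<mu> \<sigma> \<alpha> k br 0 \<le> 0 \<longleftrightarrow> condK_rev \<mu> \<sigma> \<alpha> k)"
  proof (intro allI impI)
    fix br assume "0 \<le> br \<and> br \<le> bss \<mu> \<sigma> \<alpha> k"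
    hence m: "max br b0 = b0" unfolding b0_def by simp
    show "(H \<mu> \<sigma> \<alpha> k br 0 \<ge> 0 \<longleftrightarrow> condK \<mu> \<sigma> \<alpha> k)
     \<and> (H \<mu> \<sigma> \<alpha> k br 0 \<le> 0 \<longleftrightarrow> condK_rev \<mu> \<sigma> \<alpha> k)"
      using HH0[of br] unfolding m cK cKr using IIIa IIIb IIIc IIId by blast
  qed
  have P5: "condK_rev \<mu> \<sigma> \<alpha> k \<longrightarrow> (\<forall>br\<ge>0. H \<mu> \<sigma> \<alpha> k br 0 \<le> 0)"
  proof (intro impI allI)
    fix br :: real assume "condK_rev \<mu> \<sigma> \<alpha> k" "0 \<le> br"
    hence "b0 \<ge> bsf p q" using cKr IIIc by blast
    hence "GG p q (max br b0) \<ge> (p - q) / k" using V_abs[OF k b0 fb0] by simp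
    thus "H \<mu> \<sigma> \<alpha> k br 0 \<le> 0" using HH0[of br] by blast
  qed
  have P6: "condK \<mu> \<sigma> \<alpha> k \<longrightarrow>
       (\<exists>!bh. bh \<ge> bss \<mu> \<sigma> \<alpha> k \<and> G \<mu> \<sigma> \<alpha> bh = (r1 \<mu> \<sigma> \<alpha> - r2 \<mu> \<sigma> \<alpha>) / k)
     \<and> (\<forall>bh. bh \<ge> bss \<mu> \<sigma> \<alpha> k \<and> G \<mu> \<sigma> \<alpha> bh = (r1 \<mu> \<sigma> \<alpha> - r2 \<mu> \<sigma> \<alpha>) / k \<longrightarrow>
          (\<forall>br\<ge>0. H \<mu> \<sigma> \<alpha> k br 0 \<ge> 0 \<longleftrightarrow> br \<le> bh))"
  proof
    assume "condK \<mu> \<sigma> \<alpha> k"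
    hence bs: "b0 \<le> bsf p q" using cK IIIa by blast
    show "(\<exists>!bh. bh \<ge> bss \<mu> \<sigma> \<alpha> k \<and> G \<mu> \<sigma> \<alpha> bh = (r1 \<mu> \<sigma> \<alpha> - r2 \<mu> \<sigma> \<alpha>) / k)
     \<and> (\<forall>bh. bh \<ge> bss \<mu> \<sigma> \<alpha> k \<and> G \<mu> \<sigma> \<alpha> bh = (r1 \<mu> \<sigma> \<alpha> - r2 \<mu> \<sigma> \<alpha>) / k \<longrightarrow>
          (\<forall>br\<ge>0. H \<mu> \<sigma> \<alpha> k br 0 \<ge> 0 \<longleftrightarrow> br \<le> bh))"
      unfolding Geq rq b0_def[symmetric]
    proof (intro conjI allI impI)
      show "\<exists>!bh. bh \<ge> b0 \<and> GG p q bh = (p - q) / k" by (rule VI_ex[OF k b0 fb0 bs])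
    next
      fix bh br :: real
      assume bh: "b0 \<le> bh \<and> GG p q bh = (p - q) / k" and br: "0 \<le> br"
      have "GG p q (max br b0) \<le> (p - q) / k \<longleftrightarrow> max br b0 \<le> bh"
        using VI_iff[OF k b0 fb0 bs, of bh "max br b0"] bh by simp
      moreover have "max br b0 \<le> bh \<longleftrightarrow> br \<le> bh" using bh by simp
      ultimately show "0 \<le> H \<mu> \<sigma> \<alpha> k br 0 \<longleftrightarrow> br \<le> bh" using HH0[of br] by blast
    qed
  qed
  show ?thesis using P1 P2 P3 P4 P5 P6 by blast
qed

end
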